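(* The dcpo $\mathcal Q\mathbb R_\ell$, with its Scott topology, is sober.
   Context: The Sorgenfrey line $\mathbb R_\ell$ is $\mathbb R$ with the topology generated by the half-open intervals $[a,b[$, $a<b$. $\mathcal Q\mathbb R_\ell$ is the set of non-empty compact subsets of $\mathbb R_\ell$ ordered by reverse inclusion; it is a dcpo. A space is sober if every irreducible closed subset is the closure of a unique point. *)

theory Defs
  imports "HOL-Analysis.Analysis"
begin

definition sorgenfrey :: "real topology" where
  "sorgenfrey = topology_generated_by {{a..<b} | a b. a < b}"

definition QRl :: "real set set" where
  "QRl = {K. K \<noteq> {} \<and> compactin sorgenfrey K}"

definition QRl_le :: "real set \<Rightarrow> real set \<Rightarrow> bool" where
  "QRl_le K L \<longleftrightarrow> L \<subseteq> K"

definition directed_in :: "('a \<Rightarrow> 'a \<Rightarrow> bool) \<Rightarrow> 'a set \<Rightarrow> bool" where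
  "directed_in le D \<longleftrightarrow> D \<noteq> {} \<and> (\<forall>x\<in>D. \<forall>y\<in>D. \<exists>z\<in>D. le x z \<and> le y z)"

definition is_lub_in :: "'a set \<Rightarrow> ('a \<Rightarrow> 'a \<Rightarrow> bool) \<Rightarrow> 'a set \<Rightarrow> 'a \<Rightarrow> bool" where
  "is_lub_in P le D s \<longleftrightarrow> s \<in> P \<and> (\<forall>d\<in>D. le d s) \<and> (\<forall>u\<in>P. (\<forall>d\<in>D. le d u) \<longrightarrow> le s u)"

definition scott_open :: "'a set \<Rightarrow> ('a \<Rightarrow> 'a \<Rightarrow> bool) \<Rightarrow> 'a set \<Rightarrow> bool" where
  "scott_open P le U \<longleftrightarrow> U \<subseteq> P
     \<and> (\<forall>x\<in>U. \<forall>y\<in>P. le x y \<longrightarrow> y \<in> U)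
     \<and> (\<forall>D s. D \<subseteq> P \<and> directed_in le D \<and> is_lub_in P le D s \<and> s \<in> U \<longrightarrow> D \<inter> U \<noteq> {})"

lemma istopology_scott_open: "istopology (scott_open P le)"
  unfolding istopology_def
proof (intro conjI allI impI)
  fix S T assume S: "scott_open P le S" and T: "scott_open P le T"
  have S1: "S \<subseteq> P" and S2: "\<And>x y. x \<in> S \<Longrightarrow> y \<in> P \<Longrightarrow> le x y \<Longrightarrow> y \<in> S"
    and S3: "\<And>D s. D \<subseteq> P \<Longrightarrow> directed_in le D \<Longrightarrow> is_lub_in P le D s \<Longrightarrow> s \<in> S \<Longrightarrow> D \<inter> S \<noteq> {}"
    using S unfolding scott_open_def by auto
  have T1: "T \<subseteq> P" and T2: "\<And>x y. x \<in> T \<Longrightarrow> y \<in> P \<Longrightarrow> le x y \<Longrightarrow> y \<in> T"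
    and T3: "\<And>D s. D \<subseteq> P \<Longrightarrow> directed_in le D \<Longrightarrow> is_lub_in P le D s \<Longrightarrow> s \<in> T \<Longrightarrow> D \<inter> T \<noteq> {}"
    using T unfolding scott_open_def by auto
  have "D \<inter> (S \<inter> T) \<noteq> {}" if H: "D \<subseteq> P" "directed_in le D" "is_lub_in P le D s" "s \<in> S \<inter> T" for D s
  proof -
    obtain d1 where d1: "d1 \<in> D" "d1 \<in> S" using S3[OF H(1-3)] H(4) by auto
    obtain d2 where d2: "d2 \<in> D" "d2 \<in> T" using T3[OF H(1-3)] H(4) by auto
    obtain z where z: "z \<in> D" "le d1 z" "le d2 z" using H(2) d1(1) d2(1) unfolding directed_in_def by meson
    have zP: "z \<in> P" using z(1) H(1) by auto
    have "z \<in> S" using S2[OF d1(2) zP z(2)] .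
    moreover have "z \<in> T" using T2[OF d2(2) zP z(3)] .
    ultimately show ?thesis using z(1) by auto
  qed
  then show "scott_open P le (S \<inter> T)"
    unfolding scott_open_def using S1 S2 T2 by blast
next
  fix K assume K: "\<forall>U\<in>K. scott_open P le U"
  have "D \<inter> \<Union>K \<noteq> {}" if H: "D \<subseteq> P" "directed_in le D" "is_lub_in P le D s" "s \<in> \<Union>K" for D s
  proof -
    obtain U where U: "U \<in> K" "s \<in> U" using H(4) by auto
    have "scott_open P le U" using K U(1) by blast
    then have "D \<inter> U \<noteq> {}" using U(2) H(1-3) unfolding scott_open_def by blast
    then show ?thesis using U(1) by auto
  qed
  moreover have "\<Union>K \<subseteq> P" using K unfolding scott_open_def by blast
  moreover have "y \<in> \<Union>K" if xy: "x \<in> \<Union>K" "y \<in> P" "le x y" for x y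
  proof -
    obtain U where U: "U \<in> K" "x \<in> U" using xy(1) by blast
    have "scott_open P le U" using K U(1) by blast
    then have "y \<in> U" using U(2) xy(2,3) unfolding scott_open_def by blast
    then show ?thesis using U(1) by blast
  qed
  ultimately show "scott_open P le (\<Union>K)" unfolding scott_open_def by blast
qed

definition scott_topology :: "'a set \<Rightarrow> ('a \<Rightarrow> 'a \<Rightarrow> bool) \<Rightarrow> 'a topology" where
  "scott_topology P le = topology (scott_open P le)"

lemma openin_scott_topology: "openin (scott_topology P le) U \<longleftrightarrow> scott_open P le U"
  unfolding scott_topology_def by (simp add: topology_inverse'[OF istopology_scott_open])

definition irreducible_closed :: "'a topology \<Rightarrow> 'a set \<Rightarrow> bool" where
  "irreducible_closed X F \<longleftrightarrow> closedin X F \<and> F \<noteq> {}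
     \<and> (\<forall>A B. closedin X A \<and> closedin X B \<and> F \<subseteq> A \<union> B \<longrightarrow> F \<subseteq> A \<or> F \<subseteq> B)"

definition sober :: "'a topology \<Rightarrow> bool" where
  "sober X \<longleftrightarrow> (\<forall>F. irreducible_closed X F \<longrightarrow> (\<exists>!x. x \<in> topspace X \<and> F = X closure_of {x}))"

end

theory Submission
  imports Defs
begin

lemma sorg_open_iff:
  "openin sorgenfrey U \<longleftrightarrow> (\<forall>x\<in>U. \<exists>e>0. {x..<x+e} \<subseteq> U)"
proof
  assume "openin sorgenfrey U"
  then have "generate_topology_on {{a..<b} | a b. a < b} U"
    unfolding sorgenfrey_def by (rule openin_topology_generated_by)
  then show "\<forall>x\<in>U. \<exists>e>0. {x..<x+e} \<subseteq> U"
  proof (induction rule: generate_topology_on.induct)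
    case Empty then show ?case by simp
  next
    case (Int a b)
    show ?case
    proof
      fix x assume "x \<in> a \<inter> b"
      then obtain e1 e2 where "e1 > 0" "{x..<x+e1} \<subseteq> a" "e2>0" "{x..<x+e2} \<subseteq> b"
        using Int.IH by blast
      then show "\<exists>e>0. {x..<x+e} \<subseteq> a \<inter> b"
        by (rule_tac x="min e1 e2" in exI) (auto simp: subset_iff)
    qed
  next
    case (UN K)
    then show ?case by (meson UnionE Union_upper order_trans)
  next
    case (Basis s)
    then obtain a b where s: "s = {a..<b}" "a < b" by blast
    show ?case
    proof
      fix x assume "x \<in> s"
      then show "\<exists>e>0. {x..<x+e} \<subseteq> s" using s
        by (rule_tac x="b - x" in exI) auto
    qed
  qed
next
  assume H: "\<forall>x\<in>U. \<exists>e>0. {x..<x+e} \<subseteq> U"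
  then obtain e where e: "\<And>x. x \<in> U \<Longrightarrow> e x > 0 \<and> {x..<x + e x} \<subseteq> U" by metis
  have "U = \<Union>((\<lambda>x. {x..<x + e x}) ` U)"
    using e by fastforce
  moreover have "generate_topology_on {{a..<b} | a b. a < b} (\<Union>((\<lambda>x. {x..<x + e x}) ` U))"
    apply (rule generate_topology_on.UN)
    apply (rule generate_topology_on.Basis)
    using e by fastforce
  ultimately show "openin sorgenfrey U"
    unfolding sorgenfrey_def openin_topology_generated_by_iff by simp
qed

lemma sorg_topspace[simp]: "topspace sorgenfrey = UNIV"
proof -
  have "openin sorgenfrey UNIV" unfolding sorg_open_iff using zero_less_one by blast
  then show ?thesis using openin_subset[of sorgenfrey UNIV] by auto
qed

lemma sorg_Hausdorff: "Hausdorff_space sorgenfrey"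
  unfolding Hausdorff_space_def
proof (intro allI impI)
  fix x y :: real assume "x \<in> topspace sorgenfrey \<and> y \<in> topspace sorgenfrey \<and> x \<noteq> y"
  then have "x \<noteq> y" by simp
  have o: "openin sorgenfrey {a..<b}" for a b :: real
    unfolding sorg_open_iff by (intro ballI, rule_tac x="b-x" in exI) auto
  show "\<exists>U V. openin sorgenfrey U \<and> openin sorgenfrey V \<and> x \<in> U \<and> y \<in> V \<and> disjnt U V"
  proof (cases "x < y")
    case True then show ?thesis
      by (rule_tac x="{x..<y}" in exI, rule_tac x="{y..<y+1}" in exI) (auto simp: o disjnt_def)
  next
    case False then have "y < x" using \<open>x\<noteq>y\<close> by auto
    then show ?thesis
      by (rule_tac x="{x..<x+1}" in exI, rule_tac x="{y..<x}" in exI) (auto simp: o disjnt_def)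
  qed
qed

lemma sorg_compact_closed: "compactin sorgenfrey K \<Longrightarrow> closedin sorgenfrey K"
  using compactin_imp_closedin sorg_Hausdorff by blast

lemma sorg_open_compl_compact: "compactin sorgenfrey K \<Longrightarrow> openin sorgenfrey (- K)"
  using sorg_compact_closed closedin_def by (metis Compl_eq_Diff_UNIV sorg_topspace)

lemma inc_cover:
  fixes U :: "nat \<Rightarrow> 'a set"
  assumes S: "compactin X S" and U: "\<And>n. openin X (U n)" and mono: "\<And>n m. n \<le> m \<Longrightarrow> U n \<subseteq> U m"
    and cov: "S \<subseteq> \<Union>(range U)"
  shows "\<exists>n. S \<subseteq> U n"
proof -
  obtain \<F> where F: "finite \<F>" "\<F> \<subseteq> range U" "S \<subseteq> \<Union>\<F>"
    using S U cov unfolding compactin_def by (metis rangeE)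
  then obtain N where N: "finite N" "\<F> = U ` N" by (metis finite_subset_image subset_UNIV)
  show ?thesis
  proof (cases "N = {}")
    case True then show ?thesis using F N by auto
  next
    case False
    have "\<Union>\<F> \<subseteq> U (Max N)"
    proof
      fix x assume "x \<in> \<Union>\<F>"
      then obtain i where "i \<in> N" "x \<in> U i" using N by auto
      then show "x \<in> U (Max N)" using mono[OF Max_ge[OF N(1) \<open>i \<in> N\<close>]] by blast
    qed
    then show ?thesis using F by blast
  qed
qed

lemma sorg_interval_open: "openin sorgenfrey {a..<b::real}"
  unfolding sorg_open_iff by (intro ballI, rule_tac x="b-x" in exI) auto

lemma nbhd_base:
  assumes Q: "compactin sorgenfrey Q" and Ow: "openin sorgenfrey Ow" and QO: "Q \<subseteq> Ow"
  shows "\<exists>n. \<forall>y\<in>Q. {y..<y + 1 / real (Suc n)} \<subseteq> Ow"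
proof -
  define U where "U n = \<Union>{{a..<c} | a c. {a..<c + 1 / real (Suc n)} \<subseteq> Ow}" for n
  have "openin sorgenfrey (U n)" for n
    unfolding U_def by (rule openin_Union) (auto intro: sorg_interval_open)
  moreover have "U n \<subseteq> U m" if "n \<le> m" for n m
  proof -
    have "1 / real (Suc m) \<le> 1 / real (Suc n)" using that by (simp add: frac_le)
    then have "{a..<c + 1 / real (Suc m)} \<subseteq> {a..<c + 1 / real (Suc n)}" for a c by auto
    then show ?thesis unfolding U_def by blast
  qed
  moreover have "Q \<subseteq> \<Union>(range U)"
  proof
    fix y assume "y \<in> Q"
    then obtain e where e: "e > 0" "{y..<y+e} \<subseteq> Ow" using Ow QO sorg_open_iff by blast
    obtain n where n: "inverse (real (Suc n)) < e/2" using reals_Archimedean[of "e/2"] e by auto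
    have "{y..<(y + 1 / real (Suc n)) + 1 / real (Suc n)} \<subseteq> {y..<y+e}" using n by (auto simp: field_simps)
    then have "{y..<y + 1 / real (Suc n)} \<subseteq> U n" unfolding U_def using e by blast
    moreover have "y \<in> {y..<y + 1 / real (Suc n)}" by simp
    ultimately show "y \<in> \<Union>(range U)" by blast
  qed
  ultimately obtain n where "Q \<subseteq> U n" using inc_cover[OF Q] by metis
  have "{y..<y + 1 / real (Suc n)} \<subseteq> Ow" if "y \<in> Q" for y
  proof -
    have "y \<in> U n" using \<open>Q \<subseteq> U n\<close> that by blast
    then obtain S where S: "S \<in> {{a..<c} | a c. {a..<c + 1 / real (Suc n)} \<subseteq> Ow}" "y \<in> S"
      unfolding U_def by blast
    then obtain a c where "S = {a..<c}" "{a..<c + 1 / real (Suc n)} \<subseteq> Ow" by blast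
    then have "y \<in> {a..<c}" "{a..<c + 1 / real (Suc n)} \<subseteq> Ow" using S by auto
    then show ?thesis by auto
  qed
  then show ?thesis by blast
qed


lemma dir_lower:
  assumes "directed_in QRl_le D" "finite S" "S \<subseteq> D"
  shows "\<exists>z\<in>D. \<forall>x\<in>S. z \<subseteq> x"
  using assms(2,3)
proof (induction S rule: finite_induct)
  case empty then show ?case using assms(1) unfolding directed_in_def by auto
next
  case (insert a S)
  then obtain z where z: "z \<in> D" "\<forall>x\<in>S. z \<subseteq> x" by auto
  obtain w where "w \<in> D" "QRl_le z w" "QRl_le a w"
    using assms(1) z(1) insert.prems unfolding directed_in_def by (meson insert_subset)
  then show ?case using z unfolding QRl_le_def by (rule_tac x=w in bexI) auto
qed

lemma dir_cover:
  assumes D: "D \<subseteq> QRl" "directed_in QRl_le D" and W: "openin sorgenfrey W" "\<Inter>D \<subseteq> W"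
  shows "\<exists>d\<in>D. d \<subseteq> W"
proof -
  obtain d0 where d0: "d0 \<in> D" using D(2) unfolding directed_in_def by auto
  have cd0: "compactin sorgenfrey d0" using d0 D(1) unfolding QRl_def by auto
  let ?U = "insert W (uminus ` D)"
  have "\<forall>U\<in>?U. openin sorgenfrey U"
    using W(1) D(1) sorg_open_compl_compact unfolding QRl_def by auto
  moreover have "d0 \<subseteq> \<Union>?U" using W(2) by auto
  ultimately obtain \<F> where F: "finite \<F>" "\<F> \<subseteq> ?U" "d0 \<subseteq> \<Union>\<F>"
    using cd0 unfolding compactin_def by meson
  define S where "S = D \<inter> uminus ` \<F>"
  have "finite S" unfolding S_def using F(1) by simp
  then obtain z where z: "z \<in> D" "\<forall>x\<in>insert d0 S. z \<subseteq> x"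
    using dir_lower[OF D(2), of "insert d0 S"] d0 unfolding S_def by auto
  have "z \<subseteq> W"
  proof
    fix y assume "y \<in> z"
    then have "y \<in> d0" using z by auto
    then obtain V where V: "V \<in> \<F>" "y \<in> V" using F(3) by auto
    show "y \<in> W"
    proof (cases "V = W")
      case True then show ?thesis using V by simp
    next
      case False
      then obtain d where "d \<in> D" "V = - d" using V F(2) by auto
      then have "d \<in> S" using V unfolding S_def by auto
      then have "z \<subseteq> d" using z by auto
      then show ?thesis using \<open>V = - d\<close> V \<open>y \<in> z\<close> by auto
    qed
  qed
  then show ?thesis using z by auto
qed

lemma Inter_QRl:
  assumes D: "D \<subseteq> QRl" "directed_in QRl_le D"
  shows "\<Inter>D \<in> QRl"
proof -
  have "\<Inter>D \<noteq> {}"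
  proof
    assume "\<Inter>D = {}"
    then obtain d where "d \<in> D" "d \<subseteq> {}" using dir_cover[OF D, of "{}"] by auto
    then show False using D(1) unfolding QRl_def by auto
  qed
  moreover have "compactin sorgenfrey (\<Inter>D)"
  proof -
    obtain d0 where d0: "d0 \<in> D" using D(2) unfolding directed_in_def by auto
    show ?thesis
      apply (rule closed_compactin_Inter[OF _ d0])
      using d0 D(1) sorg_compact_closed unfolding QRl_def by auto
  qed
  ultimately show ?thesis unfolding QRl_def by auto
qed

lemma lub_eq_Inter:
  assumes D: "D \<subseteq> QRl" "directed_in QRl_le D" and s: "is_lub_in QRl QRl_le D s"
  shows "s = \<Inter>D"
proof -
  have "\<Inter>D \<in> QRl" using Inter_QRl[OF D] .
  moreover have "\<forall>d\<in>D. QRl_le d (\<Inter>D)" unfolding QRl_le_def by auto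
  ultimately have "\<Inter>D \<subseteq> s" using s unfolding is_lub_in_def QRl_le_def by auto
  moreover have "s \<subseteq> \<Inter>D" using s unfolding is_lub_in_def QRl_le_def by auto
  ultimately show ?thesis by auto
qed

lemma lub_Inter:
  assumes D: "D \<subseteq> QRl" "directed_in QRl_le D"
  shows "is_lub_in QRl QRl_le D (\<Inter>D)"
  using Inter_QRl[OF D] unfolding is_lub_in_def QRl_le_def by auto

lemma box_scott_open:
  assumes W: "openin sorgenfrey W"
  shows "scott_open QRl QRl_le {L\<in>QRl. L \<subseteq> W}"
  unfolding scott_open_def
proof (intro conjI allI impI ballI)
  fix D s assume H: "D \<subseteq> QRl \<and> directed_in QRl_le D \<and> is_lub_in QRl QRl_le D s \<and> s \<in> {L \<in> QRl. L \<subseteq> W}"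
  then have "s = \<Inter>D" using lub_eq_Inter by blast
  moreover have D1: "D \<subseteq> QRl" and D2: "directed_in QRl_le D" using H by auto
  ultimately have "\<Inter>D \<subseteq> W" using H by auto
  then obtain d where "d \<in> D" "d \<subseteq> W" using dir_cover[OF D1 D2 W] by auto
  then show "D \<inter> {L \<in> QRl. L \<subseteq> W} \<noteq> {}" using H by auto
qed (auto simp: QRl_le_def)

abbreviation "SX \<equiv> scott_topology QRl QRl_le"

lemma scott_topspace: "topspace SX = QRl"
proof -
  have "scott_open QRl QRl_le QRl" unfolding scott_open_def directed_in_def by auto
  then have "openin SX QRl" by (simp add: openin_scott_topology)
  then have "QRl \<subseteq> topspace SX" by (rule openin_subset)
  moreover have "topspace SX \<subseteq> QRl"
    using openin_topspace[of SX] unfolding openin_scott_topology scott_open_def by blast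
  ultimately show ?thesis by auto
qed

lemma scott_closure_sing:
  assumes K: "K \<in> QRl"
  shows "SX closure_of {K} = {L\<in>QRl. K \<subseteq> L}"
proof
  show "SX closure_of {K} \<subseteq> {L\<in>QRl. K \<subseteq> L}"
  proof
    fix L assume L: "L \<in> SX closure_of {K}"
    then have LQ: "L \<in> QRl" by (simp add: in_closure_of scott_topspace)
    let ?T = "{L\<in>QRl. \<not> K \<subseteq> L}"
    have "scott_open QRl QRl_le ?T"
      unfolding scott_open_def
    proof (intro conjI allI impI ballI)
      fix D s assume H: "D \<subseteq> QRl \<and> directed_in QRl_le D \<and> is_lub_in QRl QRl_le D s \<and> s \<in> ?T"
      show "D \<inter> ?T \<noteq> {}"
      proof
        assume "D \<inter> ?T = {}"
        then have "\<forall>d\<in>D. QRl_le d K" using H unfolding QRl_le_def by auto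
        then have "QRl_le s K" using H K unfolding is_lub_in_def by auto
        then show False using H unfolding QRl_le_def by auto
      qed
    next
      show "?T \<subseteq> QRl" by auto
    next
      fix x y assume "x \<in> ?T" "y \<in> QRl" "QRl_le x y"
      then show "y \<in> ?T" unfolding QRl_le_def by auto
    qed
    then have "openin SX ?T" by (simp add: openin_scott_topology)
    show "L \<in> {L\<in>QRl. K \<subseteq> L}"
    proof (rule ccontr)
      assume "L \<notin> {L\<in>QRl. K \<subseteq> L}"
      then have "L \<in> ?T" using LQ by auto
      moreover have "\<forall>T. L \<in> T \<and> openin SX T \<longrightarrow> (\<exists>y. y \<in> {K} \<and> y \<in> T)"
        using L unfolding in_closure_of by blast
      ultimately obtain y where "y \<in> {K}" "y \<in> ?T" using \<open>openin SX ?T\<close> by meson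
      then have "K \<in> ?T" by simp
      then show False by auto
    qed
  qed
next
  show "{L\<in>QRl. K \<subseteq> L} \<subseteq> SX closure_of {K}"
  proof
    fix L assume L: "L \<in> {L\<in>QRl. K \<subseteq> L}"
    show "L \<in> SX closure_of {K}"
      unfolding in_closure_of scott_topspace
    proof (intro conjI allI impI)
      show "L \<in> QRl" using L by auto
      fix T assume "L \<in> T \<and> openin SX T"
      then have "scott_open QRl QRl_le T" "L \<in> T" by (simp_all add: openin_scott_topology)
      moreover have "QRl_le L K" using L unfolding QRl_le_def by auto
      ultimately have "K \<in> T" using K unfolding scott_open_def by blast
      then show "\<exists>y. y \<in> {K} \<and> y \<in> T" by auto
    qed
  qed
qed


lemma irr_F_sub: "irreducible_closed SX F \<Longrightarrow> F \<subseteq> QRl"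
  unfolding irreducible_closed_def using closedin_subset scott_topspace by metis

lemma irr_F_open: "irreducible_closed SX F \<Longrightarrow> scott_open QRl QRl_le (QRl - F)"
  unfolding irreducible_closed_def closedin_def scott_topspace openin_scott_topology by blast

lemma irr_F_down:
  assumes "irreducible_closed SX F" "L \<in> F" "L' \<in> QRl" "L \<subseteq> L'"
  shows "L' \<in> F"
proof (rule ccontr)
  assume "L' \<notin> F"
  then have "L' \<in> QRl - F" using assms by auto
  moreover have "L \<in> QRl" using irr_F_sub[OF assms(1)] assms(2) by auto
  moreover have "QRl_le L' L" using assms unfolding QRl_le_def by auto
  ultimately have "L \<in> QRl - F" using irr_F_open[OF assms(1)] unfolding scott_open_def by blast
  then show False using assms by auto
qed

lemma irr_F_dir:
  assumes "irreducible_closed SX F" "D \<subseteq> F" "directed_in QRl_le D"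
  shows "\<Inter>D \<in> F"
proof (rule ccontr)
  have D: "D \<subseteq> QRl" using assms irr_F_sub by blast
  assume "\<Inter>D \<notin> F"
  then have "\<Inter>D \<in> QRl - F" using Inter_QRl[OF D assms(3)] by auto
  then have "D \<inter> (QRl - F) \<noteq> {}"
    using irr_F_open[OF assms(1)] lub_Inter[OF D assms(3)] D assms(3) unfolding scott_open_def by blast
  then show False using assms by auto
qed

lemma irr_F_irr:
  assumes F: "irreducible_closed SX F" and W1: "openin sorgenfrey W1" and W2: "openin sorgenfrey W2"
    and L1: "L1 \<in> F" "L1 \<subseteq> W1" and L2: "L2 \<in> F" "L2 \<subseteq> W2"
  shows "\<exists>L\<in>F. L \<subseteq> W1 \<inter> W2"
proof -
  have c: "closedin SX (QRl - {L\<in>QRl. L \<subseteq> W})" if "openin sorgenfrey W" for W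
  proof -
    have "openin SX {L\<in>QRl. L \<subseteq> W}" using box_scott_open[OF that] by (simp add: openin_scott_topology)
    moreover have "QRl - (QRl - {L\<in>QRl. L \<subseteq> W}) = {L\<in>QRl. L \<subseteq> W}" by auto
    ultimately show ?thesis unfolding closedin_def scott_topspace by auto
  qed
  have FQ: "F \<subseteq> QRl" using irr_F_sub[OF F] .
  have "\<not> F \<subseteq> QRl - {L\<in>QRl. L \<subseteq> W1}" using L1 FQ by auto
  moreover have "\<not> F \<subseteq> QRl - {L\<in>QRl. L \<subseteq> W2}" using L2 FQ by auto
  ultimately have "\<not> F \<subseteq> (QRl - {L\<in>QRl. L \<subseteq> W1}) \<union> (QRl - {L\<in>QRl. L \<subseteq> W2})"
    using F c[OF W1] c[OF W2] unfolding irreducible_closed_def by blast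
  then show ?thesis using FQ by auto
qed

lemma irr_F_good:
  assumes F: "irreducible_closed SX F" and Q: "Q \<in> QRl"
    and good: "\<And>N. openin sorgenfrey N \<Longrightarrow> Q \<subseteq> N \<Longrightarrow> \<exists>L\<in>F. L \<subseteq> N"
  shows "Q \<in> F"
proof -
  have cQ: "compactin sorgenfrey Q" and Qne: "Q \<noteq> {}" using Q unfolding QRl_def by auto
  define N where "N n = (\<Union>y\<in>Q. {y..<y + 1 / real (Suc n)})" for n
  have Nopen: "openin sorgenfrey (N n)" for n
    unfolding N_def by (rule openin_Union) (auto intro: sorg_interval_open)
  have QN: "Q \<subseteq> N n" for n unfolding N_def by force
  have Nmono: "N m \<subseteq> N k" if "k \<le> m" for k m
  proof -
    have "1 / real (Suc m) \<le> 1 / real (Suc k)" using that by (simp add: frac_le)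
    then show ?thesis unfolding N_def by force
  qed
  have Nbase: "\<exists>k. N k \<subseteq> Ow" if Ow: "openin sorgenfrey Ow" "Q \<subseteq> Ow" for Ow
  proof -
    obtain k where "\<forall>y\<in>Q. {y..<y + 1 / real (Suc k)} \<subseteq> Ow" using nbhd_base[OF cQ Ow] by blast
    then show ?thesis unfolding N_def by blast
  qed
  have "\<forall>n. \<exists>L. L \<in> F \<and> L \<subseteq> N n" using good[OF Nopen QN] by blast
  then obtain L where L: "\<And>n. L n \<in> F" "\<And>n. L n \<subseteq> N n" by metis
  have LQ: "L n \<in> QRl" for n using L irr_F_sub[OF F] by blast
  define E where "E n = Q \<union> \<Union>(L ` {n..})" for n
  have Ecompact: "compactin sorgenfrey (E n)" for n
    unfolding compactin_def
  proof (intro conjI allI impI)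
    show "E n \<subseteq> topspace sorgenfrey" by simp
    fix \<U> assume U: "(\<forall>U\<in>\<U>. openin sorgenfrey U) \<and> E n \<subseteq> \<Union>\<U>"
    then have "Q \<subseteq> \<Union>\<U>" unfolding E_def by auto
    then obtain \<F>0 where F0: "finite \<F>0" "\<F>0 \<subseteq> \<U>" "Q \<subseteq> \<Union>\<F>0"
      using cQ U unfolding compactin_def by meson
    have "openin sorgenfrey (\<Union>\<F>0)" using F0 U by (meson openin_Union subsetD)
    then obtain k where k: "N k \<subseteq> \<Union>\<F>0" using Nbase F0 by blast
    define k' where "k' = max k n"
    have "compactin sorgenfrey (\<Union>(L ` {n..<k'}))"
      by (rule compactin_Union) (use LQ in \<open>auto simp: QRl_def\<close>)
    moreover have "\<Union>(L ` {n..<k'}) \<subseteq> E n" unfolding E_def by auto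
    then have "\<Union>(L ` {n..<k'}) \<subseteq> \<Union>\<U>" using U by blast
    ultimately obtain \<F>1 where F1: "finite \<F>1" "\<F>1 \<subseteq> \<U>" "\<Union>(L ` {n..<k'}) \<subseteq> \<Union>\<F>1"
      using U unfolding compactin_def by meson
    have "E n \<subseteq> \<Union>(\<F>0 \<union> \<F>1)"
    proof
      fix x assume "x \<in> E n"
      then consider "x \<in> Q" | m where "m \<ge> n" "x \<in> L m" unfolding E_def by auto
      then show "x \<in> \<Union>(\<F>0 \<union> \<F>1)"
      proof cases
        case 1 then show ?thesis using F0 by auto
      next
        case (2 m)
        show ?thesis
        proof (cases "m < k'")
          case True
          then have "x \<in> \<Union>(L ` {n..<k'})" using 2 by auto
          then show ?thesis using F1 by blast
        next
          case False
          then have "k \<le> m" unfolding k'_def by auto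
          then have "x \<in> N k" using Nmono L(2) 2 by blast
          then show ?thesis using k by auto
        qed
      qed
    qed
    then show "\<exists>\<F>. finite \<F> \<and> \<F> \<subseteq> \<U> \<and> E n \<subseteq> \<Union>\<F>"
      using F0 F1 by (rule_tac x="\<F>0 \<union> \<F>1" in exI) auto
  qed
  have EQ: "E n \<in> QRl" for n using Ecompact Qne unfolding QRl_def E_def by auto
  have EF: "E n \<in> F" for n
    using irr_F_down[OF F L(1) EQ] unfolding E_def by auto
  have Emono: "E m \<subseteq> E k" if "k \<le> m" for k m unfolding E_def using that by auto
  have dir: "directed_in QRl_le (range E)"
    unfolding directed_in_def QRl_le_def
  proof (intro conjI ballI)
    fix x y assume "x \<in> range E" "y \<in> range E"
    then obtain i j where "x = E i" "y = E j" by auto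
    then show "\<exists>z\<in>range E. z \<subseteq> x \<and> z \<subseteq> y" using Emono
      by (rule_tac x="E (max i j)" in bexI) auto
  qed auto
  have "\<Inter>(range E) \<in> F" using irr_F_dir[OF F _ dir] EF by auto
  moreover have "\<Inter>(range E) = Q"
  proof
    show "Q \<subseteq> \<Inter>(range E)" unfolding E_def by auto
    show "\<Inter>(range E) \<subseteq> Q"
    proof
      fix x assume x: "x \<in> \<Inter>(range E)"
      show "x \<in> Q"
      proof (rule ccontr)
        assume "x \<notin> Q"
        have "compactin sorgenfrey {x}" by simp
        then have "openin sorgenfrey (- {x})" by (rule sorg_open_compl_compact)
        then obtain k where k: "N k \<subseteq> - {x}" using Nbase \<open>x \<notin> Q\<close> by blast
        have "x \<in> E k" using x by auto
        then obtain m where "m \<ge> k" "x \<in> L m" unfolding E_def using \<open>x \<notin> Q\<close> by auto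
        then have "x \<in> N k" using Nmono L(2) by blast
        then show False using k by auto
      qed
    qed
  qed
  ultimately show ?thesis by simp
qed

lemma irr_F_min_exists:
  assumes F: "irreducible_closed SX F"
  shows "\<exists>K\<in>F. \<forall>Y\<in>F. Y \<subseteq> K \<longrightarrow> Y = K"
proof -
  have Fne: "F \<noteq> {}" using F unfolding irreducible_closed_def by auto
  have chH: "\<forall>C\<in>chains (uminus ` F). \<exists>U\<in>uminus ` F. \<forall>X\<in>C. X \<subseteq> U"
  proof
    fix C assume C: "C \<in> chains (uminus ` F)"
    show "\<exists>U\<in>uminus ` F. \<forall>X\<in>C. X \<subseteq> U"
    proof (cases "C = {}")
      case True then show ?thesis using Fne by auto
    next
      case False
      have "C \<subseteq> uminus ` F" using C unfolding chains_def by blast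
      then have CF: "uminus ` C \<subseteq> F" by (auto simp: image_iff)
      have dir: "directed_in QRl_le (uminus ` C)"
        unfolding directed_in_def QRl_le_def
      proof (intro conjI ballI)
        show "uminus ` C \<noteq> {}" using False by auto
        fix x y assume "x \<in> uminus ` C" "y \<in> uminus ` C"
        then obtain a b where ab: "a \<in> C" "b \<in> C" "x = - a" "y = - b" by auto
        then have "a \<subseteq> b \<or> b \<subseteq> a" using C unfolding chains_def chain_subset_def by auto
        then show "\<exists>z\<in>uminus ` C. z \<subseteq> x \<and> z \<subseteq> y"
        proof
          assume "a \<subseteq> b" then show ?thesis using ab by (rule_tac x="- b" in bexI) auto
        next
          assume "b \<subseteq> a" then show ?thesis using ab by (rule_tac x="- a" in bexI) auto
        qed
      qed
      have "\<Inter>(uminus ` C) \<in> F" using irr_F_dir[OF F CF dir] .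
      then have "- \<Inter>(uminus ` C) \<in> uminus ` F" by (rule imageI)
      moreover have "\<forall>X\<in>C. X \<subseteq> - \<Inter>(uminus ` C)" by auto
      ultimately show ?thesis by blast
    qed
  qed
  obtain M where M: "M \<in> uminus ` F" "\<forall>X\<in>uminus ` F. M \<subseteq> X \<longrightarrow> X = M"
    using Zorn_Lemma2[OF chH] by (elim bexE) blast
  then obtain K where K: "K \<in> F" "M = - K" by auto
  have "\<forall>Y\<in>F. Y \<subseteq> K \<longrightarrow> Y = K"
  proof (intro ballI impI)
    fix Y assume "Y \<in> F" "Y \<subseteq> K"
    then have "M \<subseteq> - Y" "- Y \<in> uminus ` F" using K by auto
    then have "- Y = M" using M(2) by blast
    then show "Y = K" using K by auto
  qed
  then show ?thesis using K by auto
qed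

lemma irr_F_minimum:
  assumes F: "irreducible_closed SX F" and K: "K \<in> F" and Kmin: "\<forall>Y\<in>F. Y \<subseteq> K \<longrightarrow> Y = K"
    and L: "L \<in> F"
  shows "K \<subseteq> L"
proof (rule ccontr)
  assume "\<not> K \<subseteq> L"
  then obtain x where x: "x \<in> K" "x \<notin> L" by auto
  have FQ: "F \<subseteq> QRl" using irr_F_sub[OF F] .
  have cK: "compactin sorgenfrey K" and cL: "compactin sorgenfrey L" using K L FQ unfolding QRl_def by auto
  define C where "C n = {..<x} \<union> {x + 1 / real (Suc n)..}" for n
  define W where "W n = {x..<x + 1 / real (Suc n)}" for n
  have CW: "C n = - W n" for n unfolding C_def W_def by auto
  have Copen: "openin sorgenfrey (C n)" for n
    unfolding sorg_open_iff
  proof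
    fix y assume "y \<in> C n"
    then consider "y < x" | "y \<ge> x + 1 / real (Suc n)" unfolding C_def by auto
    then show "\<exists>e>0. {y..<y + e} \<subseteq> C n"
    proof cases
      case 1 then show ?thesis unfolding C_def by (rule_tac x="x - y" in exI) auto
    next
      case 2 then show ?thesis unfolding C_def by (rule_tac x="1" in exI) auto
    qed
  qed
  have Cmono: "C n \<subseteq> C m" if "n \<le> m" for n m
  proof -
    have "1 / real (Suc m) \<le> 1 / real (Suc n)" using that by (simp add: frac_le)
    then show ?thesis unfolding C_def by auto
  qed
  have "L \<subseteq> \<Union>(range C)"
  proof
    fix y assume "y \<in> L"
    then have "y \<noteq> x" using x by auto
    show "y \<in> \<Union>(range C)"
    proof (cases "y < x")
      case True then show ?thesis unfolding C_def by auto
    next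
      case False
      then have "y - x > 0" using \<open>y \<noteq> x\<close> by auto
      then obtain n where "inverse (real (Suc n)) < y - x" using reals_Archimedean by blast
      then have "y \<in> C n" unfolding C_def by (auto simp: field_simps)
      then show ?thesis by auto
    qed
  qed
  then have cov: "L \<subseteq> \<Union>(range C)" .
  have "\<exists>n. L \<subseteq> C n"
    by (rule inc_cover[where X=sorgenfrey and S=L and U=C], rule cL, rule Copen, erule Cmono, rule cov)
  then obtain n where Ln: "L \<subseteq> C n" by (elim exE)
  have Wopen: "openin sorgenfrey (W n)" unfolding W_def by (rule sorg_interval_open)
  define Q where "Q = K \<inter> C n"
  have Qc: "compactin sorgenfrey Q"
  proof (rule closed_compactin[OF cK])
    show "Q \<subseteq> K" unfolding Q_def by auto
    have "closedin sorgenfrey (C n)"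
      unfolding closedin_def using Wopen CW by (simp add: Compl_eq_Diff_UNIV[symmetric])
    then show "closedin sorgenfrey Q" unfolding Q_def using sorg_compact_closed[OF cK] by (rule closedin_Int[rotated])
  qed
  have Qne: "Q \<noteq> {}"
  proof
    assume "Q = {}"
    then have "K \<subseteq> W n" unfolding Q_def using CW by auto
    then obtain L' where "L' \<in> F" "L' \<subseteq> W n \<inter> C n" using irr_F_irr[OF F Wopen Copen K _ L Ln] by blast
    moreover have "W n \<inter> C n = {}" using CW by auto
    ultimately show False using FQ unfolding QRl_def by auto
  qed
  have "Q \<in> F"
  proof (rule irr_F_good[OF F])
    show "Q \<in> QRl" using Qc Qne unfolding QRl_def by auto
    fix N assume N: "openin sorgenfrey N" "Q \<subseteq> N"
    have "K \<subseteq> N \<union> W n" using N CW unfolding Q_def by auto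
    then obtain L' where "L' \<in> F" "L' \<subseteq> (N \<union> W n) \<inter> C n"
      using irr_F_irr[OF F openin_Un[OF N(1) Wopen] Copen K _ L Ln] by blast
    moreover have "(N \<union> W n) \<inter> C n \<subseteq> N" using CW by auto
    ultimately show "\<exists>L\<in>F. L \<subseteq> N" by blast
  qed
  moreover have "Q \<subseteq> K" unfolding Q_def by auto
  ultimately have "Q = K" using Kmin by blast
  moreover have "x \<notin> Q" unfolding Q_def C_def by auto
  ultimately show False using x by auto
qed

theorem proposition4p23:
  shows "sober (scott_topology QRl QRl_le)"
  unfolding sober_def
proof (intro allI impI)
  fix F assume F: "irreducible_closed SX F"
  obtain K where K: "K \<in> F" "\<forall>Y\<in>F. Y \<subseteq> K \<longrightarrow> Y = K" using irr_F_min_exists[OF F] by blast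
  have KQ: "K \<in> QRl" using K irr_F_sub[OF F] by auto
  have "F = SX closure_of {K}"
    unfolding scott_closure_sing[OF KQ]
  proof
    show "F \<subseteq> {L \<in> QRl. K \<subseteq> L}" using irr_F_minimum[OF F K] irr_F_sub[OF F] by auto
    show "{L \<in> QRl. K \<subseteq> L} \<subseteq> F" using irr_F_down[OF F K(1)] by auto
  qed
  moreover have uniq: "K' = K" if "K' \<in> topspace SX" "F = SX closure_of {K'}" for K'
  proof -
    have K'Q: "K' \<in> QRl" using that scott_topspace by auto
    have "K \<in> {L \<in> QRl. K' \<subseteq> L}" using K that scott_closure_sing[OF K'Q] by auto
    moreover have "K' \<in> {L \<in> QRl. K \<subseteq> L}"
      using \<open>F = SX closure_of {K}\<close> that scott_closure_sing[OF KQ] scott_closure_sing[OF K'Q] K'Q by auto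
    ultimately show ?thesis by auto
  qed
  show "\<exists>!x. x \<in> topspace SX \<and> F = SX closure_of {x}"
  proof (rule ex1I[of _ K])
    show "K \<in> topspace SX \<and> F = SX closure_of {K}" using KQ scott_topspace \<open>F = SX closure_of {K}\<close> by simp
    fix K' assume "K' \<in> topspace SX \<and> F = SX closure_of {K'}"
    then show "K' = K" using uniq by blast
  qed
qed

end
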